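(* Let $k\ge 2$ and let $N$ be a power of two. Let $A_1,\dots,A_k$ be integer sequences, each split into $N$ blocks $A_i=\alpha_i^0\alpha_i^1\cdots\alpha_i^{N-1}$, such that for all $j_1,\dots,j_k\in\{0,\dots,N-1\}$, $\mathrm{lcis}(\alpha_1^0\cdots\alpha_1^{j_1},\dots,\alpha_k^0\cdots\alpha_k^{j_k})=j_1+\cdots+j_k+N$. Let $s$ be the largest element appearing in $A_1,\dots,A_k$. For $i\in\{1,\dots,k\}$ let $T_i^0$ be the increasingly sorted sequence of all numbers $2s+x$ with $x\in\{1,\dots,2^k-1\}$ whose $i$-th bit in binary representation is $0$, and $T_i^1$ the increasingly sorted sequence of those with $i$-th bit equal to $1$. Define $B_i=\beta_i^0\cdots\beta_i^{2N-1}$ by $\beta_i^{2j}=\mathrm{inflate}(\alpha_i^j)\circ T_i^0$ and $\beta_i^{2j+1}=T_i^1$ for $j\in\{0,\dots,N-1\}$. Then for all $j_1,\dots,j_k\in\{0,1,\dots,2N-1\}$, $$\mathrm{lcis}(\beta_1^0\cdots\beta_1^{j_1},\beta_2^0\cdots\beta_2^{j_2},\dots,\beta_k^0\cdots\beta_k^{j_k})=j_1+j_2+\cdots+j_k+2N.$$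
   Context: $\mathrm{lcis}(X_1,\dots,X_k)$ denotes the length of the longest strictly increasing sequence that is a subsequence of every $X_i$. For $A=\langle a_0,\dots,a_{n-1}\rangle$, $\mathrm{inflate}(A)=\langle 2a_0-1,2a_0,\dots,2a_{n-1}-1,2a_{n-1}\rangle$; $\circ$ and juxtaposition denote concatenation. *)

theory Defs
  imports Main "HOL-Library.Sublist"
begin

text \<open>Sequences are integer lists; a family of k sequences is X :: nat \<Rightarrow> int list, indexed by 0..k-1.\<close>

definition common_incr_subseq :: "nat \<Rightarrow> (nat \<Rightarrow> int list) \<Rightarrow> int list \<Rightarrow> bool" where
  "common_incr_subseq k X zs \<longleftrightarrow> sorted_wrt (<) zs \<and> (\<forall>i<k. subseq zs (X i))"

definition lcis :: "nat \<Rightarrow> (nat \<Rightarrow> int list) \<Rightarrow> nat" where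
  "lcis k X = Max (length ` {zs. common_incr_subseq k X zs})"

definition inflate :: "int list \<Rightarrow> int list" where
  "inflate A = concat (map (\<lambda>a. [2*a - 1, 2*a]) A)"

text \<open>T i b: increasingly sorted list of all 2s+x, 1 \<le> x \<le> 2^k-1, whose i-th bit (0-based,
  i < k, bit i = coefficient of 2^i) equals b.\<close>
definition Tseq :: "nat \<Rightarrow> int \<Rightarrow> nat \<Rightarrow> bool \<Rightarrow> int list" where
  "Tseq k s i b = sorted_list_of_set {2*s + int x | x. x \<in> {1..<2^k} \<and> bit x i = b}"

definition beta :: "nat \<Rightarrow> int \<Rightarrow> (nat \<Rightarrow> nat \<Rightarrow> int list) \<Rightarrow> nat \<Rightarrow> nat \<Rightarrow> int list" where
  "beta k s alpha i j = (if even j then inflate (alpha i (j div 2)) @ Tseq k s i False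
                          else Tseq k s i True)"

definition prefix_blocks :: "(nat \<Rightarrow> int list) \<Rightarrow> nat \<Rightarrow> int list" where
  "prefix_blocks blk j = concat (map blk [0..<Suc j])"

end

theory Submission
  imports Defs
begin


lemma concat_split:
  "concat bs = us @ h # vs \<Longrightarrow> \<exists>d<length bs. \<exists>pre sfx. bs!d = pre @ h # sfx \<and>
     us = concat (take d bs) @ pre \<and> vs = sfx @ concat (drop (Suc d) bs)"
proof (induction bs arbitrary: us)
  case Nil then show ?case by simp
next
  case (Cons b bs)
  show ?case
  proof (cases "length us < length b")
    case True
    obtain t where t1: "b = us @ t" and t2: "t @ concat bs = h # vs"
      using Cons.prems True by (auto simp: append_eq_append_conv2)
    have "t \<noteq> []" using t1 True by auto
    then obtain sfx where b: "b = us @ h # sfx" and vs: "vs = sfx @ concat bs"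
      using t1 t2 by (cases t) auto
    show ?thesis by (rule exI[of _ 0]) (use b vs in auto)
  next
    case False
    then obtain us' where us: "us = b @ us'" and c: "concat bs = us' @ h # vs"
      using Cons.prems by (auto simp: append_eq_append_conv2 Cons_eq_append_conv)
    from Cons.IH[OF c] obtain d pre sfx where "d < length bs" "bs!d = pre @ h # sfx"
      "us' = concat (take d bs) @ pre" "vs = sfx @ concat (drop (Suc d) bs)" by blast
    then show ?thesis using us by (intro exI[of _ "Suc d"]) auto
  qed
qed

lemma subseq_filterI: "subseq xs ys \<Longrightarrow> \<forall>x\<in>set xs. P x \<Longrightarrow> subseq xs (filter P ys)"
  by (induction xs ys rule: list_emb.induct) auto

lemma subseq_filter_mono: "subseq xs ys \<Longrightarrow> subseq (filter P xs) (filter P ys)"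
  by (induction xs ys rule: list_emb.induct) auto

lemma sorted_subseq:
  "sorted_wrt (<) E \<Longrightarrow> sorted_wrt (<) (T::'a::linorder list) \<Longrightarrow> set E \<subseteq> set T \<Longrightarrow> subseq E T"
proof (induction T arbitrary: E)
  case Nil then show ?case by simp
next
  case (Cons t T)
  show ?case
  proof (cases E)
    case Nil then show ?thesis by simp
  next
    case (Cons e E')
    show ?thesis
    proof (cases "e = t")
      case True
      have "set E' \<subseteq> set T" using Cons.prems \<open>E = e # E'\<close> True by auto
      then show ?thesis using Cons.IH Cons.prems \<open>E = e # E'\<close> True by auto
    next
      case False
      then have "e > t" using Cons.prems \<open>E = e # E'\<close> by auto
      then have "set E \<subseteq> set T" using Cons.prems \<open>E = e # E'\<close> by fastforce
      then show ?thesis using Cons.IH Cons.prems by auto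
    qed
  qed
qed

lemma subseq_concat_map: "subseq xs ys \<Longrightarrow> subseq (concat (map f xs)) (concat (map f ys))"
  by (induction xs ys rule: list_emb.induct) (auto intro: list_emb_append2 list_emb_append_mono)

lemma bit_eq_lt:
  fixes a b :: nat
  assumes "a < 2^k" "b < 2^k" "\<forall>i<k. bit a i = bit b i"
  shows "a = b"
proof (rule bit_eq_iff[THEN iffD2], intro allI impI)
  fix n show "bit a n = bit b n"
  proof (cases "n < k")
    case True then show ?thesis using assms by auto
  next
    case False
    have "a = take_bit k a" "b = take_bit k b" using assms by (simp_all add: take_bit_nat_eq_self)
    then show ?thesis using False by (metis bit_take_bit_iff)
  qed
qed

lemma set_Tseq: "set (Tseq k s i b) = {2*s + int x | x. x \<in> {1..<2^k} \<and> bit x i = b}"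
  unfolding Tseq_def by (subst set_sorted_list_of_set) auto

lemma sorted_Tseq: "sorted_wrt (<) (Tseq k s i b)"
  unfolding Tseq_def by (rule strict_sorted_list_of_set)



lemma subseq_set: "subseq xs ys \<Longrightarrow> set xs \<subseteq> set ys"
  by (induction xs ys rule: list_emb.induct) auto

lemma cis_finite: "k \<ge> 1 \<Longrightarrow> finite {zs. common_incr_subseq k X zs}"
proof -
  assume "k \<ge> 1"
  have "{zs. common_incr_subseq k X zs} \<subseteq> {zs. set zs \<subseteq> set (X 0) \<and> length zs \<le> length (X 0)}"
    using \<open>k \<ge> 1\<close> by (auto simp: common_incr_subseq_def dest: subseq_set list_emb_length)
  then show ?thesis by (rule finite_subset) (simp add: finite_lists_length_le)
qed

lemma lcis_ge: "k \<ge> 1 \<Longrightarrow> common_incr_subseq k X zs \<Longrightarrow> length zs \<le> lcis k X"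
  unfolding lcis_def by (rule Max_ge) (auto simp: cis_finite)

lemma lcis_ex: "k \<ge> 1 \<Longrightarrow> \<exists>zs. common_incr_subseq k X zs \<and> length zs = lcis k X"
proof -
  assume k: "k \<ge> 1"
  have ne: "[] \<in> {zs. common_incr_subseq k X zs}" by (simp add: common_incr_subseq_def)
  have "lcis k X \<in> length ` {zs. common_incr_subseq k X zs}"
    unfolding lcis_def by (rule Max_in) (use cis_finite[OF k] ne in auto)
  then show ?thesis by auto
qed

lemma lcis_eqI: "k \<ge> 1 \<Longrightarrow> common_incr_subseq k X zs \<Longrightarrow> length zs = n \<Longrightarrow>
  (\<And>ws. common_incr_subseq k X ws \<Longrightarrow> length ws \<le> n) \<Longrightarrow> lcis k X = n"
  by (metis le_antisym lcis_ex lcis_ge)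

definition dbl :: "int \<Rightarrow> int" where "dbl v = (v + 1) div 2"

lemma deflate_ex:
  "sorted_wrt (<) L \<Longrightarrow> \<exists>D. sorted_wrt (<) D \<and> set D = dbl ` set L \<and> subseq D (map dbl L)"
proof (induction L)
  case Nil then show ?case by simp
next
  case (Cons v L)
  then obtain D where D: "sorted_wrt (<) D" "set D = dbl ` set L" "subseq D (map dbl L)" by auto
  show ?case
  proof (cases "dbl v \<in> dbl ` set L")
    case True then show ?thesis using D by (intro exI[of _ D]) auto
  next
    case False
    have "\<forall>w\<in>set L. dbl v \<le> dbl w" using Cons.prems unfolding dbl_def
      by (auto intro: zdiv_mono1)
    then have "\<forall>w\<in>set D. dbl v < w" using False D(2) by force
    then show ?thesis using D False by (intro exI[of _ "dbl v # D"]) auto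
  qed
qed

lemma dbl_inflate: "map dbl (inflate X) = concat (map (\<lambda>a. [a,a]) X)"
  unfolding inflate_def dbl_def by (induction X) auto

lemma undouble:
  "sorted_wrt (<) D \<Longrightarrow> subseq D (concat (map (\<lambda>a. [a,a]) X)) \<Longrightarrow> subseq D (X::int list)"
proof (induction X arbitrary: D)
  case Nil then show ?case by simp
next
  case (Cons a X)
  have "subseq D ([a,a] @ concat (map (\<lambda>a. [a,a]) X))" using Cons.prems(2) by simp
  then obtain D1 D2 where D: "D = D1 @ D2" "subseq D1 [a,a]"
      "subseq D2 (concat (map (\<lambda>a. [a,a]) X))"
    by (rule subseq_appendE)
  have s2: "sorted_wrt (<) D2" using Cons.prems(1) D(1) sorted_wrt_append by blast
  have "sorted_wrt (<) D1" using Cons.prems(1) D(1) sorted_wrt_append by blast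
  then have d1: "distinct D1" by (simp add: strict_sorted_iff)
  have "set D1 \<subseteq> set [a,a]" using D(2) by (rule subseq_set)
  then have "set D1 \<subseteq> {a}" by simp
  have "length D1 = card (set D1)" by (simp add: d1 distinct_card)
  also have "\<dots> \<le> card {a}" by (rule card_mono) (use \<open>set D1 \<subseteq> {a}\<close> in auto)
  finally have "length D1 \<le> 1" by simp
  then have "D1 = [] \<or> D1 = [a]" using \<open>set D1 \<subseteq> {a}\<close>
    by (cases D1) auto
  then have "subseq D1 [a]" by auto
  from list_emb_append_mono[OF this Cons.IH[OF s2 D(3)]] show ?case using D(1) by simp
qed

lemma card_fibres2:
  fixes A :: "int set"
  assumes "finite A"
  shows "card A \<le> 2 * card (dbl ` A)"
proof -
  have "A = (\<Union>u\<in>dbl ` A. {v\<in>A. dbl v = u})" by auto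
  then have "card A \<le> (\<Sum>u\<in>dbl ` A. card {v\<in>A. dbl v = u})"
    by (metis card_UN_le assms finite_imageI)
  also have "\<dots> \<le> (\<Sum>u\<in>dbl ` A. 2)"
  proof (rule sum_mono)
    fix u
    have "{v\<in>A. dbl v = u} \<subseteq> {2*u - 1, 2*u}" unfolding dbl_def by auto
    then have "card {v\<in>A. dbl v = u} \<le> card {2*u - 1, 2*u}" by (rule card_mono[rotated]) auto
    also have "\<dots> \<le> 2" by (simp add: card_insert_le_m1)
    finally show "card {v\<in>A. dbl v = u} \<le> 2" .
  qed
  finally show ?thesis by simp
qed

lemma low_bound:
  assumes k: "k \<ge> 1" and s: "sorted_wrt (<) L" and sub: "\<forall>i<k. subseq L (inflate (X i))"
  shows "length L \<le> 2 * lcis k X"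
proof -
  obtain D where D: "sorted_wrt (<) D" "set D = dbl ` set L" "subseq D (map dbl L)"
    using deflate_ex[OF s] by blast
  have "\<forall>i<k. subseq D (X i)"
  proof (intro allI impI)
    fix i assume "i < k"
    then have "subseq (map dbl L) (map dbl (inflate (X i)))" using sub subseq_map by blast
    then have "subseq D (concat (map (\<lambda>a. [a,a]) (X i)))" using D(3) dbl_inflate
      by (metis subseq_order.order_trans)
    then show "subseq D (X i)" using undouble D(1) by blast
  qed
  then have "length D \<le> lcis k X" using lcis_ge[OF k] D(1) by (simp add: common_incr_subseq_def)
  moreover have "length L = card (set L)" using s by (simp add: distinct_card strict_sorted_iff)
  moreover have "length D = card (set D)" using D(1) by (simp add: distinct_card strict_sorted_iff)
  ultimately show ?thesis using card_fibres2[of "set L"] D(2) by simp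
qed



lemma step_lemma:
  assumes "subseq (h # H') (concat (map f ps))"
  shows "\<exists>d<length ps. h \<in> set (f (ps!d)) \<and> subseq H' (concat (map f (drop d ps)))"
proof -
  obtain us v vs where 1: "concat (map f ps) = us @ v # vs" "h = v" "subseq H' vs"
    using list_emb_ConsD[OF assms] by blast
  from concat_split[OF 1(1)] obtain d pre sfx where d: "d < length ps"
    "f (ps!d) = pre @ v # sfx" "vs = sfx @ concat (drop (Suc d) (map f ps))" by auto
  have "drop d ps = ps!d # drop (Suc d) ps" using d(1) by (simp add: Cons_nth_drop_Suc)
  then have c: "concat (map f (drop d ps)) = f (ps!d) @ concat (map f (drop (Suc d) ps))" by simp
  have "subseq sfx (f (ps!d))" using d(2) by (simp add: suffix_imp_subseq suffix_def)
  then have "subseq vs (concat (map f (drop d ps)))" unfolding c d(3)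
    by (simp add: drop_map list_emb_append_mono)
  then have "subseq H' (concat (map f (drop d ps)))" using 1(3) by (metis subseq_order.order_trans)
  moreover have "h \<in> set (f (ps!d))" using d(2) 1(2) by simp
  ultimately show ?thesis using d(1) by blast
qed

lemma high_bound:
  fixes H :: "int list" and ps :: "nat \<Rightarrow> bool list" and x0 :: nat
  shows "k \<ge> 1 \<Longrightarrow> \<forall>i<k. ps i \<noteq> [] \<Longrightarrow> sorted_wrt (<) H \<Longrightarrow>
   \<forall>i<k. subseq H (concat (map (Tseq k s i) (ps i))) \<Longrightarrow>
   x0 < 2^k \<Longrightarrow> \<forall>i<k. bit x0 i = hd (ps i) \<Longrightarrow> \<forall>v\<in>set H. v > 2*s + int x0 \<Longrightarrow>
   length H \<le> (\<Sum>i<k. length (ps i) - 1)"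
proof (induction H arbitrary: ps x0)
  case Nil then show ?case by simp
next
  case (Cons h H)
  have "\<forall>i. \<exists>d. i < k \<longrightarrow> d < length (ps i) \<and> h \<in> set (Tseq k s i (ps i ! d)) \<and>
      subseq H (concat (map (Tseq k s i) (drop d (ps i))))"
    using Cons.prems(4) step_lemma by (metis (no_types, lifting))
  from choice[OF this] obtain d where d: "\<forall>i<k. d i < length (ps i) \<and> h \<in> set (Tseq k s i (ps i ! d i)) \<and>
      subseq H (concat (map (Tseq k s i) (drop (d i) (ps i))))" by blast
  have "h \<in> set (Tseq k s 0 (ps 0 ! d 0))" using d Cons.prems(1) by auto
  then obtain y where y: "h = 2*s + int y" "y \<in> {1..<2^k}"
    unfolding set_Tseq by blast
  have bity: "\<forall>i<k. bit y i = ps i ! d i"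
  proof (intro allI impI)
    fix i assume "i < k"
    then have "h \<in> set (Tseq k s i (ps i ! d i))" using d by blast
    then obtain y' where "h = 2*s + int y'" "bit y' i = ps i ! d i"
      unfolding set_Tseq by blast
    then show "bit y i = ps i ! d i" using y(1) by simp
  qed
  have "\<exists>i<k. d i \<noteq> 0"
  proof (rule ccontr)
    assume "\<not> (\<exists>i<k. d i \<noteq> 0)"
    then have "\<forall>i<k. bit y i = bit x0 i" using bity Cons.prems(2,6) by (simp add: hd_conv_nth)
    then have "y = x0" using bit_eq_lt[of y k x0] y(2) Cons.prems(5) by auto
    then show False using Cons.prems(7) y(1) by auto
  qed
  then obtain i0 where i0: "i0 < k" "d i0 \<noteq> 0" by blast
  have IH: "length H \<le> (\<Sum>i<k. length (drop (d i) (ps i)) - 1)"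
  proof (rule Cons.IH[of _ y])
    show "k \<ge> 1" by fact
    show "\<forall>i<k. drop (d i) (ps i) \<noteq> []" using d by auto
    show "sorted_wrt (<) H" using Cons.prems(3) by simp
    show "\<forall>i<k. subseq H (concat (map (Tseq k s i) (drop (d i) (ps i))))" using d by auto
    show "y < 2^k" using y by auto
    show "\<forall>i<k. bit y i = hd (drop (d i) (ps i))" using bity d by (simp add: hd_drop_conv_nth)
    show "\<forall>v\<in>set H. 2 * s + int y < v" using Cons.prems(3) y(1) by auto
  qed
  have eq: "(\<Sum>i<k. length (ps i) - 1) = (\<Sum>i<k. length (drop (d i) (ps i)) - 1) + (\<Sum>i<k. d i)"
    unfolding sum.distrib[symmetric] by (rule sum.cong) (use d in auto)
  have "d i0 \<le> (\<Sum>i<k. d i)" using i0 by (intro member_le_sum) auto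
  then show ?case using IH eq i0 by simp
qed



lemma nbit_lt: "(x::nat) < 2^n \<Longrightarrow> m \<ge> n \<Longrightarrow> \<not> bit x m"
  by (metis bit_take_bit_iff not_le take_bit_nat_eq_self)

lemma sorted_last: "sorted_wrt (<) (xs::nat list) \<Longrightarrow> x \<in> set xs \<Longrightarrow> x \<le> last xs"
proof (induction xs)
  case Nil then show ?case by simp
next
  case (Cons y ys)
  show ?case
  proof (cases "ys = []")
    case True then show ?thesis using Cons.prems by simp
  next
    case False
    then have "last ys \<in> set ys" by simp
    then have "y < last ys" using Cons.prems(1) by simp
    then show ?thesis using Cons False by (auto simp: less_imp_le)
  qed
qed

definition tinv :: "(nat \<Rightarrow> bool) \<Rightarrow> nat \<Rightarrow> nat list \<Rightarrow> bool" where
  "tinv r n xs \<longleftrightarrow> sorted_wrt (<) xs \<and> length xs = (\<Sum>i<n. if r i then 1 else 0) \<and>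
     (\<forall>x\<in>set xs. 1 \<le> x \<and> x < 2^n) \<and>
     (\<forall>i<n. \<exists>xs0 xs1. xs = xs0 @ xs1 \<and> (\<forall>x\<in>set xs0. \<not> bit x i) \<and> (\<forall>x\<in>set xs1. bit x i)
        \<and> (\<not> r i \<longrightarrow> xs1 = []))"

lemma tail_nat: "\<exists>xs. tinv r n xs"
proof (induction n)
  case 0 show ?case by (rule exI[of _ "[]"]) (simp add: tinv_def)
next
  case (Suc n)
  from Suc obtain xs :: "nat list" where tx: "tinv r n xs" by blast
  note xsd = tx[unfolded tinv_def]
  have xs1: "sorted_wrt (<) xs" using xsd by (rule conjunct1)
  have xs2: "length xs = (\<Sum>i<n. if r i then 1 else 0)" using xsd[THEN conjunct2] by (rule conjunct1)
  have xs3: "\<forall>x\<in>set xs. 1 \<le> x \<and> x < 2^n" using xsd[THEN conjunct2, THEN conjunct2] by (rule conjunct1)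
  have xs4: "\<forall>i<n. \<exists>xs0 xs1. xs = xs0 @ xs1 \<and> (\<forall>x\<in>set xs0. \<not> bit x i) \<and> (\<forall>x\<in>set xs1. bit x i)
        \<and> (\<not> r i \<longrightarrow> xs1 = [])" using xsd[THEN conjunct2, THEN conjunct2] by (rule conjunct2)
  note xs = xs1 xs2 xs3 xs4
  have nb: "\<forall>x\<in>set xs. \<not> bit x n"
  proof
    fix x assume "x \<in> set xs"
    then show "\<not> bit x n" using xs(3) nbit_lt[of x n n] by simp
  qed
  show ?case
  proof (cases "r n")
    case False
    show ?thesis unfolding tinv_def
    proof (intro exI[of _ xs] conjI)
      have "(2::nat)^n \<le> 2^Suc n" by simp
      then show "\<forall>x\<in>set xs. 1 \<le> x \<and> x < 2 ^ Suc n" using xs(3) less_le_trans by blast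
      show "\<forall>i<Suc n. \<exists>xs0 xs1. xs = xs0 @ xs1 \<and> (\<forall>x\<in>set xs0. \<not> bit x i) \<and> (\<forall>x\<in>set xs1. bit x i)
        \<and> (\<not> r i \<longrightarrow> xs1 = [])"
      proof (intro allI impI)
        fix i assume "i < Suc n"
        then consider "i < n" | "i = n" by linarith
        then show "\<exists>xs0 xs1. xs = xs0 @ xs1 \<and> (\<forall>x\<in>set xs0. \<not> bit x i) \<and> (\<forall>x\<in>set xs1. bit x i)
        \<and> (\<not> r i \<longrightarrow> xs1 = [])"
        proof cases
          case 1 show ?thesis by (rule xs(4)[rule_format, OF 1])
        next
          case 2 then show ?thesis using nb by (intro exI[of _ xs] exI[of _ "[]"]) auto
        qed
      qed
      show "sorted_wrt (<) xs" by (rule xs(1))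
      show "length xs = (\<Sum>i<Suc n. if r i then 1 else 0)" using xs(2) False by simp
    qed
  next
    case True
    define a where "a = (if xs = [] then 0 else last xs)"
    have a_lt: "a < 2^n" using xs(3) unfolding a_def by auto
    have a_nb: "\<not> bit a n" using nbit_lt[OF a_lt] by simp
    define z where "z = set_bit n a"
    have z_eq: "z = a + 2^n" unfolding z_def using a_nb by (simp add: set_bit_eq)
    have zbit: "bit z i = (bit a i \<or> i = n)" for i unfolding z_def by (auto simp: bit_set_bit_iff)
    have a_ge: "\<forall>x\<in>set xs. x \<le> a" unfolding a_def using sorted_last[OF xs(1)] by auto
    show ?thesis unfolding tinv_def
    proof (intro exI[of _ "xs @ [z]"] conjI)
      show "sorted_wrt (<) (xs @ [z])" using xs(1) a_ge z_eq by (auto simp: sorted_wrt_append intro: le_less_trans[of _ a])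
      show "length (xs @ [z]) = (\<Sum>i<Suc n. if r i then 1 else 0)" using xs(2) True by simp
      show "\<forall>x\<in>set (xs @ [z]). 1 \<le> x \<and> x < 2 ^ Suc n" using xs(3) z_eq a_lt by auto
      show "\<forall>i<Suc n. \<exists>xs0 xs1. xs @ [z] = xs0 @ xs1 \<and> (\<forall>x\<in>set xs0. \<not> bit x i) \<and> (\<forall>x\<in>set xs1. bit x i)
        \<and> (\<not> r i \<longrightarrow> xs1 = [])"
      proof (intro allI impI)
        fix i assume "i < Suc n"
        then consider "i < n" | "i = n" by linarith
        then show "\<exists>xs0 xs1. xs @ [z] = xs0 @ xs1 \<and> (\<forall>x\<in>set xs0. \<not> bit x i) \<and> (\<forall>x\<in>set xs1. bit x i)
        \<and> (\<not> r i \<longrightarrow> xs1 = [])"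
        proof cases
          case 2 then show ?thesis using nb True zbit by (intro exI[of _ xs] exI[of _ "[z]"]) auto
        next
          case 1
          then obtain xs0 xs1 where s: "xs = xs0 @ xs1" "\<forall>x\<in>set xs0. \<not> bit x i" "\<forall>x\<in>set xs1. bit x i"
            "\<not> r i \<longrightarrow> xs1 = []" using xs(4)[rule_format, OF 1] by auto
          have zb: "bit z i = bit a i" using zbit 1 by auto
          show ?thesis
          proof (cases "bit a i")
            case True
            then have "xs \<noteq> []" unfolding a_def by auto
            then have "a \<in> set xs1"
            proof -
              have "a = last xs" using \<open>xs \<noteq> []\<close> unfolding a_def by simp
              moreover have "a \<notin> set xs0" using s(2) True by auto
              ultimately show ?thesis using s(1) \<open>xs \<noteq> []\<close>
                by (metis last_in_set last_append append_Nil2)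
            qed
            then show ?thesis using s zb True by (intro exI[of _ xs0] exI[of _ "xs1 @ [z]"]) auto
          next
            case False
            have "xs1 = []"
            proof (rule ccontr)
              assume "xs1 \<noteq> []"
              then have "last xs \<in> set xs1" using s(1) by simp
              moreover have "a = last xs" using \<open>xs1 \<noteq> []\<close> s(1) unfolding a_def by auto
              ultimately show False using s(3) False by auto
            qed
            then show ?thesis using s zb False by (intro exI[of _ "xs0 @ [z]"] exI[of _ "[]"]) auto
          qed
        qed
      qed
    qed
  qed
qed



lemma tail_int: "\<exists>E. sorted_wrt (<) E \<and> length E = (\<Sum>i<k. if r i then 1 else 0) \<and>
   (\<forall>v\<in>set E. 2*s < v) \<and> (\<forall>i<k. subseq E (Tseq k s i False @ (if r i then Tseq k s i True else [])))"
proof -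
  obtain xs where tx: "tinv r k xs" using tail_nat by blast
  note xsd = tx[unfolded tinv_def]
  have xs1: "sorted_wrt (<) xs" using xsd by (rule conjunct1)
  have xs2: "length xs = (\<Sum>i<k. if r i then 1 else 0)" using xsd[THEN conjunct2] by (rule conjunct1)
  have xs3: "\<forall>x\<in>set xs. 1 \<le> x \<and> x < 2^k" using xsd[THEN conjunct2, THEN conjunct2] by (rule conjunct1)
  have xs4: "\<forall>i<k. \<exists>xs0 xs1. xs = xs0 @ xs1 \<and> (\<forall>x\<in>set xs0. \<not> bit x i) \<and> (\<forall>x\<in>set xs1. bit x i)
        \<and> (\<not> r i \<longrightarrow> xs1 = [])" using xsd[THEN conjunct2, THEN conjunct2] by (rule conjunct2)
  define f where "f = (\<lambda>x::nat. 2*s + int x)"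
  have sm: "sorted_wrt (<) (map f ys)" if "sorted_wrt (<) ys" for ys
    using that unfolding f_def by (simp add: sorted_wrt_map)
  have sub: "subseq (map f ys) (Tseq k s i b)"
    if "sorted_wrt (<) ys" "\<forall>x\<in>set ys. 1 \<le> x \<and> x < 2^k" "\<forall>x\<in>set ys. bit x i = b" for ys i b
  proof (rule sorted_subseq)
    show "sorted_wrt (<) (map f ys)" using sm that(1) .
    show "sorted_wrt (<) (Tseq k s i b)" by (rule sorted_Tseq)
    show "set (map f ys) \<subseteq> set (Tseq k s i b)" unfolding set_Tseq f_def using that(2,3) by auto
  qed
  show ?thesis
  proof (intro exI[of _ "map f xs"] conjI allI impI)
    show "sorted_wrt (<) (map f xs)" using sm xs1 .
    show "length (map f xs) = (\<Sum>i<k. if r i then 1 else 0)" using xs2 by simp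
    show "\<forall>v\<in>set (map f xs). 2 * s < v" using xs3 unfolding f_def by auto
  next
    fix i assume i: "i < k"
    obtain ys0 ys1 where y: "xs = ys0 @ ys1" "\<forall>x\<in>set ys0. \<not> bit x i" "\<forall>x\<in>set ys1. bit x i"
        "\<not> r i \<longrightarrow> ys1 = []" using xs4[rule_format, OF i] by auto
    have s0: "sorted_wrt (<) ys0" and s1: "sorted_wrt (<) ys1" using xs1 y(1) sorted_wrt_append by blast+
    have a0: "subseq (map f ys0) (Tseq k s i False)" by (rule sub) (use s0 xs3 y in auto)
    show "subseq (map f xs) (Tseq k s i False @ (if r i then Tseq k s i True else []))"
    proof (cases "r i")
      case True
      have a1: "subseq (map f ys1) (Tseq k s i True)" by (rule sub) (use s1 xs3 y in auto)
      show ?thesis using list_emb_append_mono[OF a0 a1] y(1) True by simp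
    next
      case False
      then show ?thesis using a0 y by simp
    qed
  qed
qed

lemma pb0: "prefix_blocks blk 0 = blk 0" unfolding prefix_blocks_def by simp
lemma pbSuc: "prefix_blocks blk (Suc j) = prefix_blocks blk j @ blk (Suc j)"
  unfolding prefix_blocks_def by simp

lemma inflate_append: "inflate (xs @ ys) = inflate xs @ inflate ys"
  unfolding inflate_def by simp

lemma inflate_le: "\<forall>a\<in>set X. a \<le> s \<Longrightarrow> \<forall>v\<in>set (inflate X). v \<le> 2*s"
  unfolding inflate_def by auto

lemma T_gt: "\<forall>v\<in>set (Tseq k s i b). 2*s < v"
  unfolding set_Tseq by auto

lemma filt_beta:
  assumes "\<forall>a\<in>set (alpha i (e div 2)). a \<le> s"
  shows "filter (\<lambda>v. v \<le> 2*s) (beta k s alpha i e) = (if even e then inflate (alpha i (e div 2)) else [])"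
    "filter (\<lambda>v. 2*s < v) (beta k s alpha i e) = Tseq k s i (odd e)"
proof -
  have a: "filter (\<lambda>v. v \<le> 2*s) (inflate (alpha i (e div 2))) = inflate (alpha i (e div 2))"
    using inflate_le[OF assms] by (simp add: filter_id_conv)
  have b: "filter (\<lambda>v. 2*s < v) (inflate (alpha i (e div 2))) = []"
    using inflate_le[OF assms] by (auto simp: filter_empty_conv)
  have c: "filter (\<lambda>v. v \<le> 2*s) (Tseq k s i bb) = []" for bb
    using T_gt[of k s i bb] by (auto simp: filter_empty_conv)
  have d: "filter (\<lambda>v. 2*s < v) (Tseq k s i bb) = Tseq k s i bb" for bb
    using T_gt[of k s i bb] by (simp add: filter_id_conv)
  show "filter (\<lambda>v. v \<le> 2*s) (beta k s alpha i e) = (if even e then inflate (alpha i (e div 2)) else [])"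
    unfolding beta_def using a c by simp
  show "filter (\<lambda>v. 2*s < v) (beta k s alpha i e) = Tseq k s i (odd e)"
    unfolding beta_def using b d by simp
qed

lemma filt_PB:
  assumes "\<forall>q\<le>j div 2. \<forall>a\<in>set (alpha i q). a \<le> s"
  shows "filter (\<lambda>v. v \<le> 2*s) (prefix_blocks (beta k s alpha i) j) = inflate (prefix_blocks (alpha i) (j div 2))"
  using assms
proof (induction j)
  case 0 then show ?case using filt_beta(1)[of alpha i 0 s k] by (simp add: pb0)
next
  case (Suc j)
  have m: "j div 2 \<le> Suc j div 2" by (rule div_le_mono) simp
  have h: "\<forall>q\<le>j div 2. \<forall>a\<in>set (alpha i q). a \<le> s"
  proof (intro allI impI)
    fix q assume "q \<le> j div 2"
    then have "q \<le> Suc j div 2" using m by linarith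
    then show "\<forall>a\<in>set (alpha i q). a \<le> s" using Suc.prems by blast
  qed
  have f: "filter (\<lambda>v. v \<le> 2*s) (beta k s alpha i (Suc j)) =
      (if even (Suc j) then inflate (alpha i (Suc j div 2)) else [])"
    by (rule filt_beta(1)) (use Suc.prems in auto)
  show ?case
  proof (cases "even (Suc j)")
    case True
    then have "Suc j div 2 = Suc (j div 2)" by presburger
    then show ?thesis using Suc.IH[OF h] f True by (simp add: pbSuc inflate_append)
  next
    case False
    then have "Suc j div 2 = j div 2" by presburger
    then show ?thesis using Suc.IH[OF h] f False by (simp add: pbSuc)
  qed
qed

lemma beta_odd: "odd j \<Longrightarrow> beta k s alpha i j = Tseq k s i True"
  unfolding beta_def by simp
lemma beta_even: "even j \<Longrightarrow> beta k s alpha i j = inflate (alpha i (j div 2)) @ Tseq k s i False"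
  unfolding beta_def by simp

lemma constr:
  "subseq (inflate (prefix_blocks (alpha i) (j div 2)) @ Tseq k s i False @ (if odd j then Tseq k s i True else []))
     (prefix_blocks (beta k s alpha i) j)"
proof (induction j)
  case 0 then show ?case by (simp add: pb0 beta_def)
next
  case (Suc j)
  show ?case
  proof (cases "even j")
    case True
    then have e: "Suc j div 2 = j div 2" by presburger
    have ih: "subseq (inflate (prefix_blocks (alpha i) (j div 2)) @ Tseq k s i False)
     (prefix_blocks (beta k s alpha i) j)" using Suc.IH True by simp
    have "subseq ((inflate (prefix_blocks (alpha i) (j div 2)) @ Tseq k s i False) @ Tseq k s i True)
     (prefix_blocks (beta k s alpha i) j @ Tseq k s i True)"
      by (rule list_emb_append_mono[OF ih]) simp
    then show ?thesis using True e by (simp add: pbSuc beta_odd)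
  next
    case False
    then have e: "Suc j div 2 = Suc (j div 2)" by presburger
    have p: "subseq (inflate (prefix_blocks (alpha i) (j div 2)))
      (inflate (prefix_blocks (alpha i) (j div 2)) @ Tseq k s i False @ (if odd j then Tseq k s i True else []))"
      by (rule list_emb_prefix) simp
    have "subseq (inflate (prefix_blocks (alpha i) (j div 2))) (prefix_blocks (beta k s alpha i) j)"
      by (rule subseq_order.order_trans[OF p Suc.IH])
    then show ?thesis using False e
      by (simp add: pbSuc beta_even inflate_append list_emb_append_mono)
  qed
qed



lemma set_inflate: "v \<in> set (inflate Z) \<Longrightarrow> \<exists>b\<in>set Z. v = 2*b - 1 \<or> v = 2*b"
  unfolding inflate_def by auto

lemma sorted_inflate: "sorted_wrt (<) Z \<Longrightarrow> sorted_wrt (<) (inflate Z)"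
proof (induction Z)
  case Nil then show ?case by (simp add: inflate_def)
next
  case (Cons a Z)
  have "\<forall>v\<in>set (inflate Z). 2*a < v"
  proof
    fix v assume "v \<in> set (inflate Z)"
    then obtain b where "b \<in> set Z" "v = 2*b - 1 \<or> v = 2*b" using set_inflate by blast
    moreover have "a < b" using Cons.prems \<open>b \<in> set Z\<close> by simp
    ultimately show "2*a < v" by auto
  qed
  moreover have "inflate (a # Z) = (2*a - 1) # 2*a # inflate Z" by (simp add: inflate_def)
  ultimately show ?case using Cons by auto
qed

lemma set_pb: "x \<in> set (prefix_blocks blk j) \<Longrightarrow> \<exists>q\<le>j. x \<in> set (blk q)"
  unfolding prefix_blocks_def by (auto simp: less_Suc_eq_le) (meson less_imp_le)

lemma pb_split: "prefix_blocks blk d = concat (map blk [0..<d]) @ blk d"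
  unfolding prefix_blocks_def by simp

lemma piece:
  fixes s :: int
  assumes Hs: "\<forall>q<N. \<forall>a\<in>set (alpha i q). a \<le> s"
    and jlt: "jj < 2 * N"
    and Lle: "\<forall>v\<in>set L. v \<le> 2*s" and hgt: "2*s < h" and Hgt: "\<forall>v\<in>set H'. 2*s < v"
    and sub: "subseq (L @ h # H') (prefix_blocks (beta k s alpha i) jj)"
  shows "\<exists>d\<le>jj. subseq L (inflate (prefix_blocks (alpha i) (d div 2))) \<and> h \<in> set (Tseq k s i (odd d))
     \<and> subseq H' (concat (map (Tseq k s i) (map odd [d..<Suc jj])))"
proof -
  define bs where "bs = map (beta k s alpha i) [0..<Suc jj]"
  have pbs: "prefix_blocks (beta k s alpha i) jj = concat bs" unfolding bs_def prefix_blocks_def ..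
  obtain us vs' where 1: "prefix_blocks (beta k s alpha i) jj = us @ vs'" "subseq L us" "subseq (h # H') vs'"
    using list_emb_appendD[OF sub] by blast
  obtain us2 v vs where 2: "vs' = us2 @ v # vs" "h = v" "subseq H' vs"
    using list_emb_ConsD[OF 1(3)] by blast
  have "concat bs = (us @ us2) @ h # vs" using 1(1) 2(1,2) pbs by simp
  from concat_split[OF this] obtain d pre sfx where d: "d < length bs" "bs!d = pre @ h # sfx"
    "us @ us2 = concat (take d bs) @ pre" "vs = sfx @ concat (drop (Suc d) bs)" by blast
  have dj: "d \<le> jj" using d(1) unfolding bs_def by simp
  have bd: "bs ! d = beta k s alpha i d" using dj unfolding bs_def by (simp del: upt_Suc)
  have tk: "take d bs = map (beta k s alpha i) [0..<d]" using dj unfolding bs_def by (simp add: take_map)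
  have dr: "drop (Suc d) bs = map (beta k s alpha i) [Suc d..<Suc jj]" unfolding bs_def by (simp add: drop_map)
  have Hsd: "\<forall>q\<le>d div 2. \<forall>a\<in>set (alpha i q). a \<le> s"
  proof (intro allI impI)
    fix q assume "q \<le> d div 2"
    then have "q < N" using dj jlt by linarith
    then show "\<forall>a\<in>set (alpha i q). a \<le> s" using Hs by blast
  qed
  have Hse: "\<forall>a\<in>set (alpha i (e div 2)). a \<le> s" if "e \<le> jj" for e
  proof -
    have "e div 2 < N" using that jlt by linarith
    then show ?thesis using Hs by blast
  qed
  have FB: "filter (\<lambda>v. 2*s < v) (beta k s alpha i e) = Tseq k s i (odd e)" if "e \<le> jj" for e
    by (rule filt_beta(2)) (rule Hse[OF that])
  have "subseq L (us @ us2)" using 1(2) by (rule list_emb_prefix)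
  then have La: "subseq L (filter (\<lambda>v. v \<le> 2*s) (us @ us2))" using Lle by (rule subseq_filterI)
  have "subseq pre (beta k s alpha i d)" using d(2) bd by (metis prefix_imp_subseq prefixI append_assoc)
  then have "subseq (filter (\<lambda>v. v \<le> 2*s) pre) (filter (\<lambda>v. v \<le> 2*s) (beta k s alpha i d))"
    by (rule subseq_filter_mono)
  then have "subseq (filter (\<lambda>v. v \<le> 2*s) (us @ us2))
       (filter (\<lambda>v. v \<le> 2*s) (prefix_blocks (beta k s alpha i) d))"
    unfolding d(3) tk pb_split by (simp add: list_emb_append_mono)
  also have "filter (\<lambda>v. v \<le> 2*s) (prefix_blocks (beta k s alpha i) d) = inflate (prefix_blocks (alpha i) (d div 2))"
    by (rule filt_PB[of d alpha i s k, OF Hsd])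
  finally have A: "subseq L (inflate (prefix_blocks (alpha i) (d div 2)))"
    using La by (metis subseq_order.order_trans)
  have "h \<in> set (filter (\<lambda>v. 2*s < v) (beta k s alpha i d))" using d(2) bd hgt by simp
  then have B: "h \<in> set (Tseq k s i (odd d))" using FB[OF dj] by simp
  have "subseq H' (filter (\<lambda>v. 2*s < v) vs)" using 2(3) Hgt by (rule subseq_filterI)
  moreover have "filter (\<lambda>v. 2*s < v) vs = filter (\<lambda>v. 2*s < v) sfx @
     concat (map (\<lambda>e. Tseq k s i (odd e)) [Suc d..<Suc jj])"
  proof -
    have mq: "map (\<lambda>e. filter (\<lambda>v. 2*s < v) (beta k s alpha i e)) [Suc d..<Suc jj] =
          map (\<lambda>e. Tseq k s i (odd e)) [Suc d..<Suc jj]"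
      by (rule map_cong[OF refl]) (rule FB, auto)
    show ?thesis unfolding d(4) dr filter_append filter_concat map_map comp_def mq ..
  qed
  moreover have "subseq (filter (\<lambda>v. 2*s < v) sfx) (Tseq k s i (odd d))"
  proof -
    have "subseq sfx (beta k s alpha i d)" using d(2) bd by (simp add: suffix_imp_subseq suffix_def)
    then have "subseq (filter (\<lambda>v. 2*s < v) sfx) (filter (\<lambda>v. 2*s < v) (beta k s alpha i d))"
      by (rule subseq_filter_mono)
    then show ?thesis using FB[OF dj] by simp
  qed
  ultimately have "subseq H' (Tseq k s i (odd d) @ concat (map (\<lambda>e. Tseq k s i (odd e)) [Suc d..<Suc jj]))"
    by (metis list_emb_append_mono subseq_order.order_refl subseq_order.order_trans)
  moreover have ud: "[d..<Suc jj] = d # [Suc d..<Suc jj]" using dj by (simp add: upt_conv_Cons)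
  have "concat (map (Tseq k s i) (map odd [d..<Suc jj])) =
     Tseq k s i (odd d) @ concat (map (\<lambda>e. Tseq k s i (odd e)) [Suc d..<Suc jj])"
    unfolding ud by (simp only: list.map concat.simps map_map comp_def)
  ultimately have C: "subseq H' (concat (map (Tseq k s i) (map odd [d..<Suc jj])))" by simp
  show ?thesis using A B C dj by blast
qed



lemma arith_aux: "(w::nat) = l + Suc h \<Longrightarrow> l \<le> 2 * (a + N) \<Longrightarrow> h \<le> c \<Longrightarrow> J = D + c \<Longrightarrow>
  D = 2 * a + m \<Longrightarrow> 1 \<le> m \<Longrightarrow> w \<le> J + 2 * N"
  by arith

lemma upper:
  fixes k N :: nat and alpha :: "nat \<Rightarrow> nat \<Rightarrow> int list" and s :: int and j :: "nat \<Rightarrow> nat"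
  assumes k1: "k \<ge> 1"
    and hyp: "\<forall>j :: nat \<Rightarrow> nat. (\<forall>i<k. j i < N) \<longrightarrow>
           lcis k (\<lambda>i. prefix_blocks (alpha i) (j i)) = (\<Sum>i<k. j i) + N"
    and Hs: "\<forall>i<k. \<forall>q<N. \<forall>a\<in>set (alpha i q). a \<le> s"
    and jlt: "\<forall>i<k. j i < 2 * N"
    and W: "common_incr_subseq k (\<lambda>i. prefix_blocks (beta k s alpha i) (j i)) W"
  shows "length W \<le> (\<Sum>i<k. j i) + 2 * N"
proof -
  have sW: "sorted_wrt (<) W" and subW: "\<forall>i<k. subseq W (prefix_blocks (beta k s alpha i) (j i))"
    using W by (auto simp: common_incr_subseq_def)
  define L where "L = takeWhile (\<lambda>v. v \<le> 2*s) W"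
  define H where "H = dropWhile (\<lambda>v. v \<le> 2*s) W"
  have WLH: "W = L @ H" unfolding L_def H_def by simp
  have Lle: "\<forall>v\<in>set L. v \<le> 2*s" unfolding L_def by (auto dest: set_takeWhileD)
  have sL: "sorted_wrt (<) L" and sH: "sorted_wrt (<) H" using sW WLH sorted_wrt_append by blast+
  show ?thesis
  proof (cases H)
    case Nil
    have "\<forall>i<k. subseq L (inflate (prefix_blocks (alpha i) (j i div 2)))"
    proof (intro allI impI)
      fix i assume i: "i < k"
      have "subseq L (prefix_blocks (beta k s alpha i) (j i))" using subW i WLH Nil by simp
      then have "subseq L (filter (\<lambda>v. v \<le> 2*s) (prefix_blocks (beta k s alpha i) (j i)))"
        using Lle by (rule subseq_filterI)
      moreover have "filter (\<lambda>v. v \<le> 2*s) (prefix_blocks (beta k s alpha i) (j i)) =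
           inflate (prefix_blocks (alpha i) (j i div 2))"
      proof (rule filt_PB, intro allI impI)
        fix q assume "q \<le> j i div 2"
        moreover have "j i < 2 * N" using jlt i by blast
        ultimately have "q < N" by linarith
        then show "\<forall>a\<in>set (alpha i q). a \<le> s" using Hs i by blast
      qed
      ultimately show "subseq L (inflate (prefix_blocks (alpha i) (j i div 2)))" by simp
    qed
    then have "length L \<le> 2 * lcis k (\<lambda>i. prefix_blocks (alpha i) (j i div 2))"
      by (rule low_bound[OF k1 sL])
    also have "lcis k (\<lambda>i. prefix_blocks (alpha i) (j i div 2)) = (\<Sum>i<k. j i div 2) + N"
    proof -
      have "\<forall>i<k. j i div 2 < N"
      proof (intro allI impI)
        fix i assume "i < k" then have "j i < 2 * N" using jlt by blast
        then show "j i div 2 < N" by linarith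
      qed
      then show ?thesis using hyp[rule_format, of "\<lambda>i. j i div 2"] by simp
    qed
    also have "2 * ((\<Sum>i<k. j i div 2) + N) \<le> (\<Sum>i<k. j i) + 2 * N"
    proof -
      have "2 * (\<Sum>i<k. j i div 2) = (\<Sum>i<k. 2 * (j i div 2))" by (simp add: sum_distrib_left)
      also have "\<dots> \<le> (\<Sum>i<k. j i)" by (rule sum_mono) simp
      finally show ?thesis by simp
    qed
    finally show ?thesis using WLH Nil by simp
  next
    case (Cons h H')
    have hgt: "2*s < h" using hd_dropWhile[of "\<lambda>v. v \<le> 2*s" W] Cons unfolding H_def by simp
    have Hgt: "\<forall>v\<in>set H'. h < v" using sH Cons by simp
    have Hgt2: "\<forall>v\<in>set H'. 2*s < v" using Hgt hgt by auto
    have "\<forall>i. \<exists>d. i < k \<longrightarrow> d \<le> j i \<and> subseq L (inflate (prefix_blocks (alpha i) (d div 2))) \<and>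
       h \<in> set (Tseq k s i (odd d)) \<and> subseq H' (concat (map (Tseq k s i) (map odd [d..<Suc (j i)])))"
    proof
      fix i show "\<exists>d. i < k \<longrightarrow> d \<le> j i \<and> subseq L (inflate (prefix_blocks (alpha i) (d div 2))) \<and>
       h \<in> set (Tseq k s i (odd d)) \<and> subseq H' (concat (map (Tseq k s i) (map odd [d..<Suc (j i)])))"
      proof (cases "i < k")
        case True
        have "subseq (L @ h # H') (prefix_blocks (beta k s alpha i) (j i))" using subW True WLH Cons by simp
        have Hsi: "\<forall>q<N. \<forall>a\<in>set (alpha i q). a \<le> s" using Hs True by blast
        have jli: "j i < 2 * N" using jlt True by blast
        obtain dd where "dd \<le> j i" "subseq L (inflate (prefix_blocks (alpha i) (dd div 2)))"
          "h \<in> set (Tseq k s i (odd dd))" "subseq H' (concat (map (Tseq k s i) (map odd [dd..<Suc (j i)])))"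
          using piece[OF Hsi jli Lle hgt Hgt2 \<open>subseq (L @ h # H') _\<close>] by blast
        then show ?thesis by (intro exI[of _ dd]) simp
      qed simp
    qed
    from choice[OF this] obtain d where d: "\<forall>i<k. d i \<le> j i \<and> subseq L (inflate (prefix_blocks (alpha i) (d i div 2))) \<and>
       h \<in> set (Tseq k s i (odd (d i))) \<and> subseq H' (concat (map (Tseq k s i) (map odd [d i..<Suc (j i)])))"
      by blast
    have "h \<in> set (Tseq k s 0 (odd (d 0)))" using d k1 by auto
    then obtain y where y: "h = 2*s + int y" "y \<in> {1..<2^k}" unfolding set_Tseq by blast
    have bity: "\<forall>i<k. bit y i = odd (d i)"
    proof (intro allI impI)
      fix i assume "i < k"
      then have "h \<in> set (Tseq k s i (odd (d i)))" using d by blast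
      then obtain y' where "h = 2*s + int y'" "bit y' i = odd (d i)" unfolding set_Tseq by blast
      then show "bit y i = odd (d i)" using y(1) by simp
    qed
    have "\<exists>i<k. odd (d i)"
    proof (rule ccontr)
      assume "\<not> (\<exists>i<k. odd (d i))"
      then have "\<forall>i<k. bit y i = bit (0::nat) i" using bity by simp
      then have "y = 0" using bit_eq_lt[of y k 0] y(2) by simp
      then show False using y(2) by simp
    qed
    then obtain i0 where i0: "i0 < k" "odd (d i0)" by blast
    have "length L \<le> 2 * lcis k (\<lambda>i. prefix_blocks (alpha i) (d i div 2))"
      by (rule low_bound[OF k1 sL]) (use d in blast)
    also have "lcis k (\<lambda>i. prefix_blocks (alpha i) (d i div 2)) = (\<Sum>i<k. d i div 2) + N"
    proof -
      have "\<forall>i<k. d i div 2 < N"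
      proof (intro allI impI)
        fix i assume "i < k" then have "j i < 2 * N" "d i \<le> j i" using jlt d by blast+
        then show "d i div 2 < N" by linarith
      qed
      then show ?thesis using hyp[rule_format, of "\<lambda>i. d i div 2"] by simp
    qed
    finally have lowL: "length L \<le> 2 * ((\<Sum>i<k. d i div 2) + N)" .
    have highH: "length H' \<le> (\<Sum>i<k. length (map odd [d i..<Suc (j i)]) - 1)"
    proof (rule high_bound[where ?x0.0 = y])
      show "k \<ge> 1" by fact
      show "\<forall>i<k. map odd [d i..<Suc (j i)] \<noteq> []" using d by auto
      show "sorted_wrt (<) H'" using sH Cons by simp
      show "\<forall>i<k. subseq H' (concat (map (Tseq k s i) (map odd [d i..<Suc (j i)])))" using d by blast
      show "y < 2^k" using y by simp
      show "\<forall>i<k. bit y i = hd (map odd [d i..<Suc (j i)])"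
      proof (intro allI impI)
        fix i assume "i < k"
        then have "d i \<le> j i" using d by blast
        then have "d i < Suc (j i)" by simp
        then have "[d i..<Suc (j i)] = d i # [Suc (d i)..<Suc (j i)]" by (rule upt_conv_Cons)
        then show "bit y i = hd (map odd [d i..<Suc (j i)])" using bity \<open>i < k\<close> by simp
      qed
      show "\<forall>v\<in>set H'. 2 * s + int y < v" using Hgt y by simp
    qed
    have "(\<Sum>i<k. length (map odd [d i..<Suc (j i)]) - 1) = (\<Sum>i<k. j i - d i)"
      by (rule sum.cong) auto
    with highH have highH': "length H' \<le> (\<Sum>i<k. j i - d i)" by simp
    have s1: "(\<Sum>i<k. j i) = (\<Sum>i<k. d i) + (\<Sum>i<k. j i - d i)"
      unfolding sum.distrib[symmetric] by (rule sum.cong) (use d in auto)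
    have s2: "(\<Sum>i<k. d i) = 2 * (\<Sum>i<k. d i div 2) + (\<Sum>i<k. d i mod 2)"
      unfolding sum_distrib_left sum.distrib[symmetric] by (rule sum.cong) auto
    have s3: "1 \<le> (\<Sum>i<k. d i mod 2)"
    proof -
      have "d i0 mod 2 \<le> (\<Sum>i<k. d i mod 2)" using i0 by (intro member_le_sum) auto
      then show ?thesis using i0 by presburger
    qed
    have "length W = length L + Suc (length H')" using WLH Cons by simp
    then show ?thesis by (rule arith_aux[OF _ lowL highH' s1 s2 s3])
  qed
qed

lemma lower:
  fixes k N :: nat and alpha :: "nat \<Rightarrow> nat \<Rightarrow> int list" and s :: int and j :: "nat \<Rightarrow> nat"
  assumes k1: "k \<ge> 1"
    and hyp: "\<forall>j :: nat \<Rightarrow> nat. (\<forall>i<k. j i < N) \<longrightarrow>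
           lcis k (\<lambda>i. prefix_blocks (alpha i) (j i)) = (\<Sum>i<k. j i) + N"
    and Hs: "\<forall>i<k. \<forall>q<N. \<forall>a\<in>set (alpha i q). a \<le> s"
    and jlt: "\<forall>i<k. j i < 2 * N"
  shows "\<exists>W. common_incr_subseq k (\<lambda>i. prefix_blocks (beta k s alpha i) (j i)) W \<and>
     length W = (\<Sum>i<k. j i) + 2 * N"
proof -
  have qlt: "\<forall>i<k. j i div 2 < N"
  proof (intro allI impI)
    fix i assume "i < k" then have "j i < 2 * N" using jlt by blast
    then show "j i div 2 < N" by linarith
  qed
  have lq: "lcis k (\<lambda>i. prefix_blocks (alpha i) (j i div 2)) = (\<Sum>i<k. j i div 2) + N"
    using hyp[rule_format, of "\<lambda>i. j i div 2"] qlt by simp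
  obtain Z where Z: "common_incr_subseq k (\<lambda>i. prefix_blocks (alpha i) (j i div 2)) Z"
    "length Z = (\<Sum>i<k. j i div 2) + N"
    using lcis_ex[OF k1, of "\<lambda>i. prefix_blocks (alpha i) (j i div 2)"] lq by auto
  have sZ: "sorted_wrt (<) Z" and subZ: "\<forall>i<k. subseq Z (prefix_blocks (alpha i) (j i div 2))"
    using Z(1) by (auto simp: common_incr_subseq_def)
  obtain E where E: "sorted_wrt (<) E" "length E = (\<Sum>i<k. if odd (j i) then 1 else 0)"
    "\<forall>v\<in>set E. 2*s < v"
    "\<forall>i<k. subseq E (Tseq k s i False @ (if odd (j i) then Tseq k s i True else []))"
    using tail_int[where r="\<lambda>i. odd (j i)" and k=k and s=s] by blast
  have Zle: "\<forall>a\<in>set Z. a \<le> s"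
  proof
    fix a assume "a \<in> set Z"
    then have "a \<in> set (prefix_blocks (alpha 0) (j 0 div 2))" using subZ k1 subseq_set by fastforce
    then obtain q where "q \<le> j 0 div 2" "a \<in> set (alpha 0 q)" using set_pb by blast
    moreover have "j 0 div 2 < N" using qlt k1 by simp
    ultimately have "q < N" "a \<in> set (alpha 0 q)" by linarith+
    moreover have "(0::nat) < k" using k1 by simp
    ultimately show "a \<le> s" using Hs by blast
  qed
  have IZle: "\<forall>v\<in>set (inflate Z). v \<le> 2*s" using inflate_le[OF Zle] .
  show ?thesis
  proof (intro exI[of _ "inflate Z @ E"] conjI)
    show "common_incr_subseq k (\<lambda>i. prefix_blocks (beta k s alpha i) (j i)) (inflate Z @ E)"
      unfolding common_incr_subseq_def
    proof (intro conjI allI impI)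
      show "sorted_wrt (<) (inflate Z @ E)" using sorted_inflate[OF sZ] E(1,3) IZle
        by (auto simp: sorted_wrt_append intro: le_less_trans[of _ "2*s"])
    next
      fix i assume i: "i < k"
      have "subseq (inflate Z) (inflate (prefix_blocks (alpha i) (j i div 2)))"
        using subZ i subseq_concat_map unfolding inflate_def by blast
      then have "subseq (inflate Z @ E) (inflate (prefix_blocks (alpha i) (j i div 2)) @
          Tseq k s i False @ (if odd (j i) then Tseq k s i True else []))"
        using E(4) i list_emb_append_mono by blast
      then show "subseq (inflate Z @ E) (prefix_blocks (beta k s alpha i) (j i))"
        using constr subseq_order.order_trans by blast
    qed
    have li: "length (inflate Z) = 2 * length Z" unfolding inflate_def by (induction Z) auto
    have "(\<Sum>i<k. j i) = (\<Sum>i<k. 2 * (j i div 2) + (if odd (j i) then 1 else 0))"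
      by (rule sum.cong) auto
    also have "\<dots> = 2 * (\<Sum>i<k. j i div 2) + (\<Sum>i<k. if odd (j i) then 1 else 0)"
      by (simp add: sum.distrib sum_distrib_left)
    finally show "length (inflate Z @ E) = (\<Sum>i<k. j i) + 2 * N"
      using li Z(2) E(2) by simp
  qed
qed

theorem lemma13:
  fixes k N :: nat and alpha :: "nat \<Rightarrow> nat \<Rightarrow> int list"
  assumes "k \<ge> 2"
    and "\<exists>m. N = 2 ^ m"
    and "\<forall>j :: nat \<Rightarrow> nat. (\<forall>i<k. j i < N) \<longrightarrow>
           lcis k (\<lambda>i. prefix_blocks (alpha i) (j i)) = (\<Sum>i<k. j i) + N"
    and "s = Max (\<Union>i<k. set (concat (map (alpha i) [0..<N])))"
  shows "\<forall>j :: nat \<Rightarrow> nat. (\<forall>i<k. j i < 2 * N) \<longrightarrow>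
           lcis k (\<lambda>i. prefix_blocks (beta k s alpha i) (j i)) = (\<Sum>i<k. j i) + 2 * N"
proof (intro allI impI)
  fix j :: "nat \<Rightarrow> nat" assume jlt: "\<forall>i<k. j i < 2 * N"
  have k1: "k \<ge> 1" using assms(1) by simp
  have Hs: "\<forall>i<k. \<forall>q<N. \<forall>a\<in>set (alpha i q). a \<le> s"
  proof (intro allI impI ballI)
    fix i q a assume "i < k" "q < N" "a \<in> set (alpha i q)"
    then have "a \<in> set (concat (map (alpha i) [0..<N]))" by auto
    then have "a \<in> (\<Union>i<k. set (concat (map (alpha i) [0..<N])))" using \<open>i < k\<close> by blast
    then show "a \<le> s" unfolding assms(4) by (intro Max_ge) auto
  qed
  obtain W where W: "common_incr_subseq k (\<lambda>i. prefix_blocks (beta k s alpha i) (j i)) W"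
     "length W = (\<Sum>i<k. j i) + 2 * N"
    using lower[OF k1 assms(3) Hs jlt] by blast
  show "lcis k (\<lambda>i. prefix_blocks (beta k s alpha i) (j i)) = (\<Sum>i<k. j i) + 2 * N"
    by (rule lcis_eqI[OF k1 W]) (rule upper[OF k1 assms(3) Hs jlt])
qed

end
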